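(* Let $1/2\le\alpha\le 1$, let $n\ge 1$, and let $S$ be a set of $n$ points in $\mathbb{R}^2$ such that no line contains more than $n^{\alpha}$ points of $S$. Then the number of unordered pairs $\{p,q\}\subset S$ such that $|p-q|\in\mathbb{Q}$ and $\{p,q\}$ has rational angle is at most $4n^{1+\alpha}$.
   Context: Identify $\mathbb{R}^2$ with $\mathbb{C}$. A pair of distinct points $p,q$ has rational angle if the segment between them, viewed as the complex number $q-p=re^{\pi i\gamma}$ with $r>0$, has $\gamma\in\mathbb{Q}$; equivalently, the line through $p$ and $q$ makes an angle with the $x$-axis that is a rational multiple of $\pi$. *)

theory Defs
  imports "HOL-Analysis.Analysis"
begin

definition rational_angle :: "complex \<Rightarrow> complex \<Rightarrow> bool" where
  "rational_angle p q \<longleftrightarrow> p \<noteq> q \<and>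
     (\<exists>r::real. \<exists>\<gamma>::real. r > 0 \<and> \<gamma> \<in> \<rat> \<and>
        q - p = complex_of_real r * exp (complex_of_real (pi * \<gamma>) * \<i>))"

definition is_line :: "complex set \<Rightarrow> bool" where
  "is_line L \<longleftrightarrow> (\<exists>a d. d \<noteq> 0 \<and> L = {a + complex_of_real t * d | t. True})"

end

theory Submission
  imports Defs "HOL-Computational_Algebra.Computational_Algebra"
begin

definition ip :: "int poly \<Rightarrow> complex \<Rightarrow> complex" where
  "ip g z = poly (map_poly of_int g) z"

lemma mpi_add: "map_poly (of_int::int\<Rightarrow>complex) (p + q) = map_poly of_int p + map_poly of_int q"
  by (rule poly_eqI) (simp add: coeff_map_poly)

lemma mpi_diff: "map_poly (of_int::int\<Rightarrow>complex) (p - q) = map_poly of_int p - map_poly of_int q"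
  by (rule poly_eqI) (simp add: coeff_map_poly)

lemma mpi_mult: "map_poly (of_int::int\<Rightarrow>complex) (p * q) = map_poly of_int p * map_poly of_int q"
  by (rule poly_eqI) (simp add: coeff_map_poly coeff_mult)

lemma mpi_pderiv: "map_poly (of_int::int\<Rightarrow>complex) (pderiv p) = pderiv (map_poly of_int p)"
  by (rule poly_eqI) (simp add: coeff_map_poly coeff_pderiv)

lemma ip_add: "ip (p + q) z = ip p z + ip q z"
  by (simp add: ip_def mpi_add)
lemma ip_diff: "ip (p - q) z = ip p z - ip q z"
  by (simp add: ip_def mpi_diff)
lemma ip_mult: "ip (p * q) z = ip p z * ip q z"
  by (simp add: ip_def mpi_mult)
lemma ip_pCons: "ip (pCons a p) z = of_int a + z * ip p z"
  by (simp add: ip_def map_poly_pCons)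
lemma ip_0[simp]: "ip 0 z = 0"
  by (simp add: ip_def)
lemma ip_const: "ip [:c:] z = of_int c"
  by (simp add: ip_pCons)
lemma ip_x: "ip [:0,1:] z = z"
  by (simp add: ip_pCons)
lemma ip_smult: "ip (smult c p) z = of_int c * ip p z"
proof -
  have "ip (smult c p) z = ip ([:c:] * p) z" by simp
  also have "\<dots> = of_int c * ip p z" by (simp only: ip_mult ip_const)
  finally show ?thesis .
qed
lemma ip_monom: "ip (monom c n) z = of_int c * z ^ n"
  by (simp add: ip_def map_poly_monom poly_monom)
lemma ip_power: "ip (p ^ k) z = ip p z ^ k"
  by (induction k) (simp_all add: ip_mult[unfolded ip_def] ip_def)
lemma ip_sum: "ip (\<Sum>i\<in>I. f i) z = (\<Sum>i\<in>I. ip (f i) z)"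
  by (induction I rule: infinite_finite_induct) (simp_all add: ip_def ip_add[unfolded ip_def])
lemma ip_pderiv: "ip (pderiv p) z = poly (pderiv (map_poly of_int p)) z"
  by (simp add: ip_def mpi_pderiv)

definition Zr :: "complex \<Rightarrow> complex set" where
  "Zr z = range (\<lambda>g. ip g z)"

lemma Zr_I: "ip g z \<in> Zr z"
  unfolding Zr_def by blast
lemma Zr_E: "x \<in> Zr z \<Longrightarrow> (\<And>g. x = ip g z \<Longrightarrow> P) \<Longrightarrow> P"
  unfolding Zr_def by blast
lemma Zr_add: "x \<in> Zr z \<Longrightarrow> y \<in> Zr z \<Longrightarrow> x + y \<in> Zr z"
  by (elim Zr_E) (simp only: ip_add[symmetric] Zr_I)
lemma Zr_mult: "x \<in> Zr z \<Longrightarrow> y \<in> Zr z \<Longrightarrow> x * y \<in> Zr z"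
  by (elim Zr_E) (simp only: ip_mult[symmetric] Zr_I)
lemma Zr_int: "of_int c \<in> Zr z"
  using Zr_I[of "[:c:]" z] by (simp only: ip_const)
lemma Zr_nat: "of_nat c \<in> Zr z"
  using Zr_int[of "int c" z] by simp
lemma Zr_0: "0 \<in> Zr z" using Zr_int[of 0] by simp
lemma Zr_z: "z \<in> Zr z"
  using Zr_I[of "[:0,1:]" z] by (simp only: ip_x)
lemma Zr_power: "x \<in> Zr z \<Longrightarrow> x ^ k \<in> Zr z"
  by (induction k) (auto intro: Zr_mult Zr_int[of 1, simplified])
lemma Zr_sum: "(\<And>i. i \<in> I \<Longrightarrow> f i \<in> Zr z) \<Longrightarrow> (\<Sum>i\<in>I. f i) \<in> Zr z"
  by (induction I rule: infinite_finite_induct) (auto intro: Zr_add Zr_0)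

lemma binom_p:
  fixes A B :: "'a::comm_ring_1"
  assumes "prime p"
  shows "(A + B) ^ p = A ^ p + B ^ p + of_nat p * (\<Sum>k\<in>{1..<p}. of_nat ((p choose k) div p) * A ^ k * B ^ (p - k))"
proof -
  have p1: "p \<ge> 1" using assms(1) prime_ge_1_nat by blast
  have "(A + B) ^ p = (\<Sum>k\<le>p. of_nat (p choose k) * A ^ k * B ^ (p - k))"
    by (rule binomial_ring)
  also have "{..p} = insert 0 (insert p {1..<p})" using p1 by auto
  also have "(\<Sum>k\<in>insert 0 (insert p {1..<p}). of_nat (p choose k) * A ^ k * B ^ (p - k))
     = B ^ p + (A ^ p + (\<Sum>k\<in>{1..<p}. of_nat (p choose k) * A ^ k * B ^ (p - k)))"
    using p1 by (subst sum.insert; auto)+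
  also have "(\<Sum>k\<in>{1..<p}. of_nat (p choose k) * A ^ k * B ^ (p - k))
      = of_nat p * (\<Sum>k\<in>{1..<p}. of_nat ((p choose k) div p) * A ^ k * B ^ (p - k))"
  proof -
    have "\<And>k. k \<in> {1..<p} \<Longrightarrow> (of_nat (p choose k) :: 'a) = of_nat p * of_nat ((p choose k) div p)"
    proof -
      fix k assume k: "k \<in> {1..<p}"
      have "p dvd (p choose k)" using k assms(1) by (intro dvd_choose_prime) auto
      then show "(of_nat (p choose k) :: 'a) = of_nat p * of_nat ((p choose k) div p)"
        by (metis dvd_mult_div_cancel of_nat_mult)
    qed
    then show ?thesis by (simp add: sum_distrib_left mult.assoc)
  qed
  finally show ?thesis by (simp add: add_ac)
qed
lemma binom_frob:
  assumes "prime p" "A \<in> Zr z" "B \<in> Zr z"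
  shows "\<exists>y\<in>Zr z. (A + B) ^ p = A ^ p + B ^ p + of_nat p * y"
  using binom_p[OF assms(1), of A B] assms
  by (intro bexI[of _ "(\<Sum>k\<in>{1..<p}. of_nat ((p choose k) div p) * A ^ k * B ^ (p - k))"])
     (auto intro!: Zr_sum Zr_mult Zr_nat Zr_power)

lemma int_binom1:
  fixes x :: int assumes "prime p"
  shows "\<exists>y. (x + 1) ^ p = x ^ p + 1 + int p * y"
  using binom_p[OF assms, of x 1] by auto

lemma nat_fermat:
  assumes "prime p"
  shows "\<exists>t. int a ^ p = int a + int p * t"
proof (induction a)
  case 0
  show ?case using prime_gt_0_nat[OF assms] by (intro exI[of _ 0]) simp
next
  case (Suc a)
  then obtain t where t: "int a ^ p = int a + int p * t" by blast
  obtain y where y: "(int a + 1) ^ p = int a ^ p + 1 + int p * y" using int_binom1 assms by blast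
  have "int (Suc a) ^ p = (int a + 1) ^ p" by (simp add: add.commute)
  also have "\<dots> = int (Suc a) + int p * (t + y)" unfolding y t by (simp add: distrib_left)
  finally show ?case by blast
qed

lemma int_fermat:
  fixes a :: int assumes "prime p"
  shows "\<exists>t. a ^ p = a + int p * t"
proof (cases "a \<ge> 0")
  case True
  then show ?thesis using nat_fermat[OF assms, of "nat a"] by simp
next
  case False
  define b where "b = nat (- a)"
  have ab: "a = - int b" using False b_def by simp
  obtain t where t: "int b ^ p = int b + int p * t" using nat_fermat[OF assms] by blast
  show ?thesis
  proof (cases "p = 2")
    case True
    have "a ^ p = int b ^ 2" unfolding ab True by simp
    also have "\<dots> = a + int p * (t + int b)" using t unfolding True ab by (simp add: distrib_left)
    finally show ?thesis by blast
  next
    case False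
    have "p \<ge> 2" using assms by (rule prime_ge_2_nat)
    with False have "p > 2" by simp
    then have op: "odd p" using assms prime_odd_nat by simp
    have "a ^ p = - (int b ^ p)" unfolding ab using op by (simp add: power_minus_odd)
    also have "\<dots> = a + int p * (- t)" using t unfolding ab by simp
    finally show ?thesis by blast
  qed
qed

lemma frob:
  assumes "prime p"
  shows "\<exists>y\<in>Zr z. ip g z ^ p = ip g (z ^ p) + of_nat p * y"
proof (induction g rule: pCons_induct)
  case 0
  have "p \<noteq> 0" using assms by auto
  then show ?case by (auto intro: bexI[of _ 0] Zr_0)
next
  case (pCons a g)
  then obtain y2 where y2: "y2 \<in> Zr z" "ip g z ^ p = ip g (z ^ p) + of_nat p * y2" by blast
  obtain y1 where y1: "y1 \<in> Zr z" "(of_int a + z * ip g z) ^ p = of_int a ^ p + (z * ip g z) ^ p + of_nat p * y1"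
    using binom_frob[OF assms, of "of_int a" z "z * ip g z"] Zr_int Zr_mult Zr_z
    by (metis Zr_def rangeI)
  obtain t where t: "a ^ p = a + int p * t" using int_fermat assms by blast
  have ta: "(of_int a :: complex) ^ p = of_int a + of_nat p * of_int t"
    using t by (metis of_int_add of_int_mult of_int_of_nat_eq of_int_power)
  have "ip (pCons a g) z ^ p = (of_int a + z * ip g z) ^ p" by (simp add: ip_pCons)
  also have "\<dots> = of_int a ^ p + z ^ p * ip g z ^ p + of_nat p * y1"
    using y1(2) by (simp add: power_mult_distrib)
  also have "\<dots> = of_int a + of_nat p * of_int t + z ^ p * (ip g (z ^ p) + of_nat p * y2) + of_nat p * y1"
    by (simp only: ta y2(2))
  also have "\<dots> = ip (pCons a g) (z ^ p) + of_nat p * (of_int t + z ^ p * y2 + y1)"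
    by (simp add: ip_pCons algebra_simps)
  finally have eq: "ip (pCons a g) z ^ p = ip (pCons a g) (z ^ p) + of_nat p * (of_int t + z ^ p * y2 + y1)" .
  have mem: "of_int t + z ^ p * y2 + y1 \<in> Zr z"
    by (intro Zr_add Zr_mult Zr_int Zr_power Zr_z y1(1) y2(1))
  show ?case using eq mem by blast
qed


lemma ip_1: "ip 1 z = 1" by (simp add: ip_def)
lemma neg1_pow: "(-1::int) ^ n = 1 \<or> (-1::int) ^ n = -1" by (cases "even n") auto

lemma minpoly_exists:
  assumes "\<zeta> ^ M = 1" "M > 0"
  obtains f :: "int poly" where "f \<noteq> 0" "ip f \<zeta> = 0" "content f = 1"
    "\<And>g. g \<noteq> 0 \<Longrightarrow> ip g \<zeta> = 0 \<Longrightarrow> degree f \<le> degree g"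
proof -
  let ?P = "\<lambda>d. \<exists>g. g \<noteq> 0 \<and> ip g \<zeta> = 0 \<and> degree g = d"
  define X where "X = (monom 1 M - 1 :: int poly)"
  have "coeff X M = 1" using assms(2) by (simp add: X_def)
  then have "X \<noteq> 0" by auto
  moreover have "ip X \<zeta> = 0" using assms(1) by (simp add: X_def ip_diff ip_monom ip_1)
  ultimately have ex: "?P (degree X)" by blast
  define d where "d = (LEAST d. ?P d)"
  have Pd: "?P d" unfolding d_def by (rule LeastI_ex) (use ex in blast)
  have dle: "\<And>d'. ?P d' \<Longrightarrow> d \<le> d'" unfolding d_def by (rule Least_le)
  obtain g0 where g0: "g0 \<noteq> 0" "ip g0 \<zeta> = 0" "degree g0 = d" using Pd by blast
  define f where "f = primitive_part g0"
  have f0: "f \<noteq> 0" using g0 by (simp add: f_def)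
  have "g0 = smult (content g0) f" unfolding f_def by simp
  then have "ip g0 \<zeta> = of_int (content g0) * ip f \<zeta>" by (metis ip_smult)
  then have fz: "ip f \<zeta> = 0" using g0 by simp
  have fc: "content f = 1" using g0 by (simp add: f_def)
  have fd: "degree f = d" using g0 by (simp add: f_def)
  show ?thesis
    by (rule that[OF f0 fz fc]) (use fd dle in blast)
qed

lemma minpoly_dvd:
  assumes f: "f \<noteq> 0" "ip f \<zeta> = 0" "content f = 1"
    "\<And>g. g \<noteq> 0 \<Longrightarrow> ip g \<zeta> = 0 \<Longrightarrow> degree f \<le> degree g"
  and g: "ip g \<zeta> = 0"
  shows "f dvd g"
proof -
  obtain q r where qr: "pseudo_divmod g f = (q, r)" by (cases "pseudo_divmod g f") auto
  define c where "c = coeff f (degree f) ^ (Suc (degree g) - degree f)"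
  have eq: "smult c g = f * q + r" using pseudo_divmod(1)[OF f(1) qr] c_def by simp
  have rdeg: "r = 0 \<or> degree r < degree f" using pseudo_divmod(2)[OF f(1) qr] .
  have c0: "c \<noteq> 0" using f(1) by (simp add: c_def)
  have "ip (smult c g) \<zeta> = ip (f * q + r) \<zeta>" using eq by simp
  then have "ip r \<zeta> = 0" using f(2) g by (simp add: ip_smult ip_add ip_mult)
  then have "r = 0" using rdeg f(4) by force
  then have eq2: "smult c g = f * q" using eq by simp
  have "content (smult c g) = content q" using content_mult[of f q] f(3) eq2 by simp
  then have "normalize c * content g = content q" by (simp add: content_smult)
  moreover have "c dvd normalize c" by simp
  ultimately have "c dvd content q" by (metis dvd_mult2)
  then have "[:c:] dvd q" by (simp add: const_poly_dvd_iff_dvd_content)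
  then obtain q' where q': "q = [:c:] * q'" by (elim dvdE)
  have "smult c g = smult c (f * q')" using eq2 q' by (simp add: mult.left_commute)
  then have "smult c (g - f * q') = 0" by (simp add: smult_diff_right)
  then have "g = f * q'" using c0 by (simp add: smult_eq_0_iff)
  then show ?thesis by simp
qed

lemma galois_prime:
  assumes z: "\<zeta> ^ M = 1" "M > 0" and p: "prime p" "\<not> p dvd M" and g: "ip g \<zeta> = 0"
  shows "ip g (\<zeta> ^ p) = 0"
proof -
  obtain f where f: "f \<noteq> 0" "ip f \<zeta> = 0" "content f = 1"
    "\<And>g. g \<noteq> 0 \<Longrightarrow> ip g \<zeta> = 0 \<Longrightarrow> degree f \<le> degree g"
    using minpoly_exists[OF z] by blast
  have fd: "f dvd g" by (rule minpoly_dvd[OF f g])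
  have "ip f (\<zeta> ^ p) = 0"
  proof (rule ccontr)
    assume nz: "ip f (\<zeta> ^ p) \<noteq> 0"
    define X where "X = (monom 1 M - 1 :: int poly)"
    have ipX: "\<And>w. ip X w = w ^ M - 1" by (simp add: X_def ip_diff ip_monom ip_1)
    have "ip X \<zeta> = 0" using z by (simp add: ipX)
    then obtain h where h: "X = f * h" using minpoly_dvd[OF f] by (auto elim: dvdE)
    have "(\<zeta> ^ p) ^ M = (\<zeta> ^ M) ^ p" by (simp add: power_mult[symmetric] mult.commute)
    then have "ip X (\<zeta> ^ p) = 0" using z by (simp add: ipX)
    then have hz: "ip h (\<zeta> ^ p) = 0" using nz h by (simp add: ip_mult)
    have "pderiv X = monom (of_nat M) (M - 1)" by (simp add: X_def pderiv_diff pderiv_monom)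
    moreover have "pderiv X = f * pderiv h + h * pderiv f" using h by (simp add: pderiv_mult)
    ultimately have "ip (monom (of_nat M) (M - 1)) \<zeta> = ip (f * pderiv h + h * pderiv f) \<zeta>" by simp
    then have dz: "of_nat M * \<zeta> ^ (M - 1) = ip h \<zeta> * ip (pderiv f) \<zeta>"
      using f(2) by (simp add: ip_monom ip_add ip_mult)
    obtain y where y: "y \<in> Zr \<zeta>" "ip h \<zeta> ^ p = ip h (\<zeta> ^ p) + of_nat p * y"
      using frob[OF p(1)] by blast
    have hp: "ip h \<zeta> ^ p = of_nat p * y" using y hz by simp
    have "\<zeta> ^ (M - 1) * \<zeta> = \<zeta> ^ Suc (M - 1)" by (simp add: power_Suc2)
    also have "Suc (M - 1) = M" using z(2) by simp
    finally have zz: "\<zeta> ^ (M - 1) * \<zeta> = 1" using z(1) by simp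
    define Y where "Y = \<zeta> ^ p * ip (pderiv f) \<zeta> ^ p * y"
    have "(of_nat M * \<zeta> ^ (M - 1)) ^ p * \<zeta> ^ p = of_nat M ^ p * (\<zeta> ^ (M - 1) * \<zeta>) ^ p"
      by (simp only: power_mult_distrib mult.assoc)
    also have "\<dots> = of_nat (M ^ p)" by (simp only: zz power_one mult_1_right of_nat_power)
    finally have k1: "(of_nat M * \<zeta> ^ (M - 1)) ^ p * \<zeta> ^ p = (of_nat (M ^ p) :: complex)" .
    have "(of_nat M * \<zeta> ^ (M - 1)) ^ p * \<zeta> ^ p = (ip h \<zeta> ^ p) * ip (pderiv f) \<zeta> ^ p * \<zeta> ^ p"
      by (simp only: dz power_mult_distrib)
    also have "\<dots> = of_nat p * Y" by (simp only: hp Y_def ac_simps)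
    finally have key: "(of_nat (M ^ p) :: complex) = of_nat p * Y" using k1 by simp
    have "Y \<in> Zr \<zeta>" unfolding Y_def by (intro Zr_mult Zr_power Zr_z y(1) Zr_I)
    then obtain G where G: "Y = ip G \<zeta>" by (elim Zr_E)
    have "X = (- 1) + monom 1 M" by (simp add: X_def)
    moreover have "degree (- 1 :: int poly) < degree (monom (1::int) M)" using z(2) by (simp add: degree_monom_eq)
    ultimately have "lead_coeff X = 1" by (simp only: lead_coeff_add_le lead_coeff_monom)
    then have "lead_coeff f * lead_coeff h = 1" using h by (simp add: lead_coeff_mult)
    then have lcf: "lead_coeff f = 1 \<or> lead_coeff f = -1" by (subst (asm) zmult_eq_1_iff) blast
    have degf: "degree f \<ge> 1"
    proof (rule ccontr)
      assume "\<not> degree f \<ge> 1"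
      then have "degree f = 0" by simp
      then obtain a0 where fe: "f = [:a0:]" by (elim degree_eq_zeroE)
      then have "ip f \<zeta> = of_int a0" by (simp add: ip_const)
      moreover have "a0 \<noteq> 0" using fe f(1) by auto
      ultimately show False using f(2) by simp
    qed
    obtain Q R where QR: "pseudo_divmod G f = (Q, R)" by (cases "pseudo_divmod G f") auto
    define c where "c = coeff f (degree f) ^ (Suc (degree G) - degree f)"
    have eq: "smult c G = f * Q + R" using pseudo_divmod(1)[OF f(1) QR] c_def by simp
    have Rdeg: "R = 0 \<or> degree R < degree f" using pseudo_divmod(2)[OF f(1) QR] .
    have c1: "c = 1 \<or> c = -1" using lcf neg1_pow[of "Suc (degree G) - degree f"] unfolding c_def by auto
    have "ip (smult c G) \<zeta> = ip (f * Q + R) \<zeta>" using eq by simp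
    then have RY: "of_int c * Y = ip R \<zeta>" using f(2) G by (simp add: ip_smult ip_add ip_mult)
    define T where "T = smult (int p) R - [: c * int (M ^ p) :]"
    have "ip T \<zeta> = of_nat p * ip R \<zeta> - of_int c * of_nat (M ^ p)"
      by (simp add: T_def ip_diff ip_smult ip_const)
    also have "\<dots> = 0" using key RY by (simp add: algebra_simps)
    finally have Tz: "ip T \<zeta> = 0" .
    have "degree T < degree f"
    proof -
      have "degree T \<le> max (degree (smult (int p) R)) (degree [: c * int (M ^ p) :])"
        unfolding T_def by (rule degree_diff_le_max)
      also have "\<dots> \<le> max (degree R) 0" by (simp add: degree_smult_le)
      finally show ?thesis using Rdeg degf by auto
    qed
    then have "T = 0" using f(4)[of T] Tz by (cases "T = 0") auto
    then have "coeff T 0 = 0" by simp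
    then have "int p * coeff R 0 = c * int (M ^ p)" by (simp add: T_def)
    then have "int p dvd c * int (M ^ p)" by (metis dvd_triv_left)
    then have "int p dvd int (M ^ p)" using c1 by (elim disjE) simp_all
    then have "p dvd M ^ p" by (simp only: int_dvd_int_iff)
    then have "p dvd M" using p(1) prime_dvd_power by blast
    then show False using p(2) by simp
  qed
  then show ?thesis using fd by (auto elim!: dvdE simp: ip_mult)
qed

lemma galois:
  assumes "\<zeta> ^ M = 1" "M > 0" "coprime k M" "ip g \<zeta> = 0"
  shows "ip g (\<zeta> ^ k) = 0"
  using assms
proof (induction k rule: less_induct)
  case (less k)
  show ?case
  proof (cases "k \<le> 1")
    case True
    then consider "k = 0" | "k = 1" by linarith
    then show ?thesis
    proof cases
      case 1
      then have "M = 1" using less.prems(3) by simp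
      then have "\<zeta> = 1" using less.prems(1) by simp
      then show ?thesis using 1 less.prems(4) by simp
    next
      case 2
      then show ?thesis using less.prems(4) by simp
    qed
  next
    case False
    then obtain p where p: "prime p" "p dvd k" using prime_factor_nat[of k] by auto
    then obtain k' where k': "k = p * k'" by (elim dvdE)
    have "k' \<noteq> 0" using False k' by (cases "k' = 0") auto
    have "p \<ge> 2" using p(1) by (rule prime_ge_2_nat)
    have "1 * k' < p * k'" using \<open>k' \<noteq> 0\<close> \<open>p \<ge> 2\<close> by (intro mult_strict_right_mono) auto
    then have "k' < k" using k' by simp
    have ck': "coprime k' M" using less.prems(3) k' by simp
    have pM: "\<not> p dvd M"
    proof
      assume "p dvd M"
      then have "is_unit p" by (rule coprime_common_divisor[OF less.prems(3) p(2)])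
      then show False using p(1) by simp
    qed
    have "ip g (\<zeta> ^ k') = 0" using less.IH[OF \<open>k' < k\<close> less.prems(1,2) ck' less.prems(4)] .
    moreover have "(\<zeta> ^ k') ^ M = 1"
    proof -
      have "(\<zeta> ^ k') ^ M = (\<zeta> ^ M) ^ k'" by (simp only: power_mult[symmetric] mult.commute)
      then show ?thesis using less.prems(1) by simp
    qed
    ultimately have "ip g ((\<zeta> ^ k') ^ p) = 0" using galois_prime less.prems(2) p(1) pM by blast
    moreover have "(\<zeta> ^ k') ^ p = \<zeta> ^ k" using k' by (simp only: power_mult[symmetric] mult.commute)
    ultimately show ?thesis by simp
  qed
qed

lemma rat_common_denom:
  assumes "finite I" "\<forall>i\<in>I. (a i :: complex) \<in> \<rat>"
  shows "\<exists>D::int. D > 0 \<and> (\<forall>i\<in>I. of_int D * a i \<in> \<int>)"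
  using assms
proof (induction I rule: finite_induct)
  case empty
  then show ?case by (intro exI[of _ 1]) simp
next
  case (insert j I)
  then obtain D where D: "D > 0" "\<forall>i\<in>I. of_int D * a i \<in> \<int>" by auto
  have "a j \<in> \<rat>" using insert.prems by simp
  then obtain n d where nd: "d > 0" "a j = of_int n / of_int d" by (elim Rats_cases') 
  show ?case
  proof (intro exI[of _ "D * d"] conjI ballI)
    show "D * d > 0" using D nd by simp
    fix i assume i: "i \<in> insert j I"
    show "of_int (D * d) * a i \<in> \<int>"
    proof (cases "i = j")
      case True
      have dn: "of_int d * a j = (of_int n :: complex)" using nd by (simp add: field_simps)
      have "of_int (D * d) * a i = of_int D * (of_int d * a j)" using True by (simp add: mult_ac)
      also have "\<dots> = (of_int (D * n) :: complex)" by (simp add: dn)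
      finally have "of_int (D * d) * a i = (of_int (D * n) :: complex)" .
      then show ?thesis by (simp only: Ints_of_int)
    next
      case False
      then have "of_int D * a i \<in> \<int>" using D i by auto
      then have "of_int d * (of_int D * a i) \<in> \<int>" using Ints_mult Ints_of_int by blast
      then show ?thesis by (simp add: mult_ac)
    qed
  qed
qed

lemma galois_sum:
  fixes \<zeta> :: complex
  assumes "finite I" "\<forall>i\<in>I. a i \<in> \<rat>" "\<zeta> ^ M = 1" "M > 0" "coprime k M"
     "(\<Sum>i\<in>I. a i * \<zeta> ^ e i) = 0"
  shows "(\<Sum>i\<in>I. a i * \<zeta> ^ (k * e i)) = 0"
proof -
  obtain D where D: "D > 0" "\<forall>i\<in>I. of_int D * a i \<in> \<int>" using rat_common_denom assms(1,2) by blast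
  have "\<forall>i\<in>I. \<exists>b. of_int D * a i = of_int b" using D(2) by (auto simp: Ints_def)
  then obtain b where b: "\<forall>i\<in>I. of_int D * a i = of_int (b i)" using bchoice[of I "\<lambda>i b. of_int D * a i = of_int b"] by blast
  define g where "g = (\<Sum>i\<in>I. monom (b i) (e i))"
  have ev: "ip g z = of_int D * (\<Sum>i\<in>I. a i * z ^ e i)" for z
  proof -
    have "ip g z = (\<Sum>i\<in>I. ip (monom (b i) (e i)) z)" unfolding g_def by (rule ip_sum)
    also have "\<dots> = (\<Sum>i\<in>I. of_int D * (a i * z ^ e i))"
    proof (rule sum.cong[OF refl])
      fix i assume "i \<in> I"
      then have "of_int (b i) = of_int D * a i" using b by simp
      then show "ip (monom (b i) (e i)) z = of_int D * (a i * z ^ e i)" by (simp add: ip_monom mult.assoc)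
    qed
    also have "\<dots> = of_int D * (\<Sum>i\<in>I. a i * z ^ e i)" by (simp add: sum_distrib_left)
    finally show ?thesis .
  qed
  have "ip g \<zeta> = 0" using ev assms(6) by simp
  then have "ip g (\<zeta> ^ k) = 0" using galois[OF assms(3,4,5)] by blast
  then have "of_int D * (\<Sum>i\<in>I. a i * (\<zeta> ^ k) ^ e i) = 0" using ev by simp
  then show ?thesis using D(1) by (simp add: power_mult)
qed


definition xi :: "nat \<Rightarrow> complex" where
  "xi D = exp (2 * complex_of_real pi * \<i> / of_nat D)"

lemma xi_pow: "xi D ^ k = exp (2 * complex_of_real pi * \<i> * of_nat k / of_nat D)"
proof -
  have "xi D ^ k = exp (of_nat k * (2 * complex_of_real pi * \<i> / of_nat D))"
    unfolding xi_def by (rule exp_of_nat_mult[symmetric])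
  then show ?thesis by (simp add: mult_ac)
qed

lemma xi_pow_eq1: "D \<ge> 1 \<Longrightarrow> xi D ^ k = 1 \<longleftrightarrow> D dvd k"
  unfolding xi_pow by (rule complex_root_unity_eq_1)

lemma xi_D: "D \<ge> 1 \<Longrightarrow> xi D ^ D = 1"
  by (simp add: xi_pow_eq1)

lemma root_as_xi:
  assumes "D \<ge> 1" "z ^ D = 1"
  shows "\<exists>k<D. z = xi D ^ k"
proof -
  have "z \<in> {z. z ^ D = 1}" using assms by simp
  then show ?thesis unfolding complex_roots_unity[OF assms(1)] xi_pow by auto
qed

lemma xi_mult:
  assumes "D = p * q" "q > 0"
  shows "xi D ^ q = xi p"
proof -
  have "xi D ^ q = exp (2 * complex_of_real pi * \<i> * of_nat q / (of_nat p * of_nat q))"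
    unfolding xi_pow assms(1) by simp
  also have "\<dots> = xi p" unfolding xi_def using assms(2) by (simp add: field_simps)
  finally show ?thesis .
qed

lemma geom_root:
  assumes "p \<ge> 1"
  shows "(\<Sum>t<p. (xi p ^ j) ^ t) = (if p dvd j then of_nat p else 0)"
proof (cases "p dvd j")
  case True
  then have "xi p ^ j = 1" using xi_pow_eq1 assms by blast
  then show ?thesis using True by simp
next
  case False
  then have ne: "xi p ^ j \<noteq> 1" using xi_pow_eq1 assms by blast
  have "(xi p ^ j) ^ p = (xi p ^ p) ^ j" by (simp only: power_mult[symmetric] mult.commute)
  also have "\<dots> = 1" using xi_D assms by simp
  finally have "(xi p ^ j) ^ p = 1" .
  then show ?thesis using False ne by (simp add: geometric_sum)
qed

lemma not_dvd6:
  assumes "D > 0" "\<not> D dvd (6::nat)"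
  shows "\<exists>p. prime p \<and> p dvd D \<and> (p ^ 2 dvd D \<or> 5 \<le> p)"
proof (rule ccontr)
  assume H: "\<not> ?thesis"
  have n4: "\<not> 4 dvd D"
  proof
    assume h4: "4 dvd D"
    have "(2::nat) dvd 4" by simp
    then have "2 dvd D" using h4 by (rule dvd_trans)
    moreover have "(2::nat) ^ 2 dvd D" using h4 by simp
    moreover have "prime (2::nat)" by simp
    ultimately show False using H by blast
  qed
  have n9: "\<not> 9 dvd D"
  proof
    assume h9: "9 dvd D"
    have "(3::nat) dvd 9" by simp
    then have "3 dvd D" using h9 by (rule dvd_trans)
    moreover have "(3::nat) ^ 2 dvd D" using h9 by simp
    moreover have "prime (3::nat)" by simp
    ultimately show False using H by blast
  qed
  define g where "g = gcd D 6"
  define m where "m = D div g"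
  have Dgm: "D = g * m" unfolding m_def g_def by simp
  have "m \<noteq> 1"
  proof
    assume "m = 1"
    then have "D = g" using Dgm by simp
    moreover have "g dvd 6" unfolding g_def by (rule gcd_dvd2)
    ultimately show False using assms(2) by simp
  qed
  moreover have "m \<noteq> 0" using Dgm assms(1) by auto
  ultimately obtain r where r: "prime r" "r dvd m" using prime_factor_nat by blast
  have rD: "r dvd D" using r Dgm by simp
  have "\<not> 5 \<le> r" using H r rD by blast
  then have r5: "r < 5" by simp
  have r2: "r \<ge> 2" using r(1) by (rule prime_ge_2_nat)
  have "r \<noteq> 4"
  proof
    assume "r = 4"
    have "(4::nat) = 2 * 2" by simp
    then have "prime ((2::nat) * 2)" using r(1) \<open>r = 4\<close> by metis
    then have "(2::nat) = 1 \<or> (2::nat) = 1" by (rule prime_product)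
    then show False by simp
  qed
  then have "r = 2 \<or> r = 3" using r5 r2 by auto
  then show False
  proof
    assume "r = 2"
    then have "2 dvd g" using rD by (simp add: g_def)
    moreover have "2 dvd m" using r \<open>r = 2\<close> by simp
    ultimately have "2 * 2 dvd g * m" by (rule mult_dvd_mono)
    then show False using n4 Dgm by simp
  next
    assume "r = 3"
    then have "3 dvd g" using rD by (simp add: g_def)
    moreover have "3 dvd m" using r \<open>r = 3\<close> by simp
    ultimately have "3 * 3 dvd g * m" by (rule mult_dvd_mono)
    then show False using n9 Dgm by simp
  qed
qed


lemma coprime_good:
  fixes p q t D :: nat
  assumes "prime p" "D = p * q" "\<not> p dvd (1 + t * q)"
  shows "coprime (1 + t * q) D"
proof (rule coprimeI)
  fix r assume r1: "r dvd 1 + t * q" and r2: "r dvd D"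
  show "is_unit r"
  proof (rule ccontr)
    assume nu: "\<not> is_unit r"
    then have "r \<noteq> 1" by auto
    then obtain s where s: "prime s" "s dvd r" using prime_factor_nat by blast
    have s1: "s dvd 1 + t * q" using s r1 dvd_trans by blast
    have "s dvd p * q" using s r2 assms(2) dvd_trans by blast
    then have "s dvd p \<or> s dvd q" using s(1) prime_dvd_mult_iff by blast
    then show False
    proof
      assume "s dvd p"
      then have "s = p" using s(1) assms(1) by (simp add: primes_dvd_imp_eq)
      then show False using s1 assms(3) by simp
    next
      assume "s dvd q"
      then have "s dvd t * q" by simp
      then have "s dvd 1" using s1 by (metis add.commute dvd_add_right_iff)
      then show False using s(1) by simp
    qed
  qed
qed

lemma coprime_good2:
  fixes p q t D :: nat
  assumes "prime p" "D = p * q" "p dvd q"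
  shows "coprime (1 + t * q) D"
proof (rule coprime_good[OF assms(1,2)])
  show "\<not> p dvd 1 + t * q"
  proof
    assume "p dvd 1 + t * q"
    moreover have "p dvd t * q" using assms(3) by simp
    ultimately have "p dvd 1" by (metis add.commute dvd_add_right_iff)
    then show False using assms(1) by simp
  qed
qed

lemma one_bad:
  fixes p q t1 t2 :: nat
  assumes "prime p" "\<not> p dvd q" "t1 < p" "t2 < p" "p dvd (1 + t1 * q)" "p dvd (1 + t2 * q)"
  shows "t1 = t2"
proof (rule ccontr)
  assume ne: "t1 \<noteq> t2"
  have gen: "\<And>a b. a < p \<Longrightarrow> b < p \<Longrightarrow> a < b \<Longrightarrow> p dvd (1 + a * q) \<Longrightarrow> p dvd (1 + b * q) \<Longrightarrow> False"
  proof -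
    fix a b assume ab: "a < p" "b < p" "a < b" "p dvd (1 + a * q)" "p dvd (1 + b * q)"
    obtain d where d: "b = a + d" using ab(3) less_imp_le le_iff_add by blast
    have "1 + b * q = (1 + a * q) + (b - a) * q" using d by (simp add: algebra_simps)
    then have "p dvd (b - a) * q" using ab(4,5) by (metis dvd_add_right_iff)
    then have "p dvd (b - a)" using assms(1,2) prime_dvd_mult_iff by blast
    moreover have "0 < b - a" "b - a < p" using ab by auto
    ultimately show False by (simp add: nat_dvd_not_less)
  qed
  show False
  proof (cases "t1 < t2")
    case True then show False using gen assms by blast
  next
    case False then have "t2 < t1" using ne by simp
    then show False using gen assms by blast
  qed
qed


lemma mann_step:
  fixes a u :: "'i \<Rightarrow> complex"
  assumes I: "finite I" "i0 \<in> I" "u i0 = 1"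
    and a: "\<forall>i\<in>I. a i \<in> \<rat>" and u: "\<forall>i\<in>I. u i ^ D = 1" and D: "D > 0"
    and sum0: "(\<Sum>i\<in>I. a i * u i) = 0"
    and minimal: "\<forall>J \<subseteq> I. J \<noteq> {} \<longrightarrow> (\<Sum>i\<in>J. a i * u i) = 0 \<longrightarrow> J = I"
    and p: "prime p" "p dvd D" "p ^ 2 dvd D \<or> card I < p"
  shows "\<forall>i\<in>I. u i ^ (D div p) = 1"
proof -
  define \<xi> where "\<xi> = xi D"
  define q where "q = D div p"
  have Dpq: "D = p * q" using p(2) by (simp add: q_def)
  have q0: "q > 0" using D Dpq by (cases q) auto
  have p1: "p \<ge> 1" using p(1) prime_ge_1_nat by blast
  have D1: "D \<ge> 1" using D by simp
  have \<xi>D: "\<xi> ^ D = 1" unfolding \<xi>_def using D1 by (rule xi_D)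
  have ex_e: "\<exists>k<D. u i = \<xi> ^ k" if "i \<in> I" for i
    unfolding \<xi>_def using root_as_xi D1 u that by blast
  define e where "e i = (if i = i0 then 0 else (SOME k. k < D \<and> u i = \<xi> ^ k))" for i
  have ue: "u i = \<xi> ^ e i" if "i \<in> I" for i
  proof (cases "i = i0")
    case True then show ?thesis using I(3) by (simp add: e_def)
  next
    case False
    have "e i < D \<and> u i = \<xi> ^ e i" unfolding e_def using False
      by simp (rule someI_ex, use ex_e[OF that] in blast)
    then show ?thesis by blast
  qed
  have e0: "e i0 = 0" by (simp add: e_def)
  define \<omega> where "\<omega> = \<xi> ^ q"
  have \<omega>xi: "\<omega> = xi p" unfolding \<omega>_def \<xi>_def by (rule xi_mult[OF Dpq q0])
  have \<omega>p: "\<omega> ^ p = 1" unfolding \<omega>xi using p1 by (rule xi_D)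
  have \<omega>mod: "\<omega> ^ n = \<omega> ^ (n mod p)" for n
  proof -
    have "\<omega> ^ n = \<omega> ^ (p * (n div p) + n mod p)" by simp
    also have "\<dots> = (\<omega> ^ p) ^ (n div p) * \<omega> ^ (n mod p)" by (simp only: power_add power_mult)
    finally show ?thesis using \<omega>p by simp
  qed
  define x where "x i = a i * \<xi> ^ e i" for i
  define F where "F t = (\<Sum>i\<in>I. x i * \<omega> ^ (t * e i))" for t
  define T where "T g = (\<Sum>i\<in>{i\<in>I. e i mod p = g}. x i)" for g
  have sum0': "(\<Sum>i\<in>I. a i * \<xi> ^ e i) = 0" using sum0 ue by (metis (no_types, lifting) sum.cong)
  have Fgood: "F t = 0" if cop: "coprime (1 + t * q) D" for t
  proof -
    have "(\<Sum>i\<in>I. a i * \<xi> ^ ((1 + t * q) * e i)) = 0"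
      by (rule galois_sum[OF I(1) a \<xi>D D cop sum0'])
    moreover have "\<xi> ^ ((1 + t * q) * e i) = \<xi> ^ e i * \<omega> ^ (t * e i)" for i
    proof -
      have "(1 + t * q) * e i = e i + q * (t * e i)" by (simp add: algebra_simps)
      then show ?thesis unfolding \<omega>_def by (simp only: power_add power_mult)
    qed
    ultimately show ?thesis unfolding F_def x_def by (simp add: mult.assoc)
  qed
  have FT: "F t = (\<Sum>g<p. \<omega> ^ (t * g) * T g)" for t
  proof -
    have "(\<Sum>g<p. \<omega> ^ (t * g) * T g) = (\<Sum>g<p. \<Sum>i\<in>{i\<in>I. e i mod p = g}. \<omega> ^ (t * (e i mod p)) * x i)"
      unfolding T_def sum_distrib_left by (intro sum.cong refl) auto
    also have "\<dots> = (\<Sum>i\<in>I. \<omega> ^ (t * (e i mod p)) * x i)"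
      by (rule sum.group) (use I(1) p1 in auto)
    also have "\<dots> = F t" unfolding F_def
    proof (intro sum.cong refl)
      fix i
      have "\<omega> ^ (t * (e i mod p)) = \<omega> ^ ((t * (e i mod p)) mod p)" by (rule \<omega>mod)
      also have "(t * (e i mod p)) mod p = (t * e i) mod p" by (simp add: mod_mult_right_eq)
      also have "\<omega> ^ \<dots> = \<omega> ^ (t * e i)" by (rule \<omega>mod[symmetric])
      finally show "\<omega> ^ (t * (e i mod p)) * x i = x i * \<omega> ^ (t * e i)" by simp
    qed
    finally show ?thesis by simp
  qed
  have inv: "of_nat p * T h = (\<Sum>t<p. \<omega> ^ (t * (p - h)) * F t)" if h: "h < p" for h
  proof -
    have "(\<Sum>t<p. \<omega> ^ (t * (p - h)) * F t) = (\<Sum>t<p. \<Sum>g<p. (\<omega> ^ (p - h + g)) ^ t * T g)"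
      unfolding FT sum_distrib_left
    proof (intro sum.cong refl)
      fix t g
      have e1: "(p - h + g) * t = t * (p - h) + t * g" by (metis add_mult_distrib2 mult.commute)
      have "(\<omega> ^ (p - h + g)) ^ t = \<omega> ^ ((p - h + g) * t)" by (rule power_mult[symmetric])
      also have "\<dots> = \<omega> ^ (t * (p - h) + t * g)" by (simp only: e1)
      also have "\<dots> = \<omega> ^ (t * (p - h)) * \<omega> ^ (t * g)" by (rule power_add)
      finally have "(\<omega> ^ (p - h + g)) ^ t = \<omega> ^ (t * (p - h)) * \<omega> ^ (t * g)" .
      then show "\<omega> ^ (t * (p - h)) * (\<omega> ^ (t * g) * T g) = (\<omega> ^ (p - h + g)) ^ t * T g"
        by (simp add: mult.assoc)
    qed
    also have "\<dots> = (\<Sum>g<p. T g * (\<Sum>t<p. (\<omega> ^ (p - h + g)) ^ t))"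
      by (subst sum.swap) (simp add: sum_distrib_left mult_ac)
    also have "\<dots> = (\<Sum>g<p. T g * (if p dvd (p - h + g) then of_nat p else 0))"
      unfolding \<omega>xi using geom_root[OF p1] by simp
    also have "\<dots> = (\<Sum>g<p. if g = h then T g * of_nat p else 0)"
    proof (intro sum.cong refl)
      fix g assume g: "g \<in> {..<p}"
      have "p dvd (p - h + g) \<longleftrightarrow> g = h"
      proof
        assume "g = h" then show "p dvd (p - h + g)" using h by simp
      next
        assume dv: "p dvd (p - h + g)"
        have "0 < p - h + g" "p - h + g < 2 * p" using g h by auto
        note bds = this
        obtain k where k: "p - h + g = p * k" using dv by (elim dvdE)
        have "k \<noteq> 0" using k bds(1) by auto
        moreover have "k < 2"
        proof (rule ccontr)
          assume "\<not> k < 2"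
          then have "p * 2 \<le> p * k" by simp
          then show False using k bds(2) by simp
        qed
        ultimately have "k = 1" by simp
        then have "p - h + g = p" using k by simp
        then show "g = h" using h by simp
      qed
      then show "T g * (if p dvd (p - h + g) then of_nat p else 0) = (if g = h then T g * of_nat p else 0)"
        by simp
    qed
    also have "\<dots> = T h * of_nat p" using h by (simp add: sum.delta)
    finally show ?thesis by simp
  qed
  obtain t0 where t0: "t0 < p" "\<forall>t<p. t \<noteq> t0 \<longrightarrow> coprime (1 + t * q) D"
  proof (cases "p dvd q")
    case True
    show ?thesis by (rule that[of 0]) (use p1 coprime_good2[OF p(1) Dpq True] in auto)
  next
    case False
    show ?thesis
    proof (cases "\<exists>t<p. p dvd (1 + t * q)")
      case True
      then obtain t1 where t1: "t1 < p" "p dvd (1 + t1 * q)" by blast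
      show ?thesis
      proof (rule that[OF t1(1)], intro allI impI)
        fix t assume "t < p" "t \<noteq> t1"
        then have "\<not> p dvd (1 + t * q)" using one_bad[OF p(1) False] t1 by blast
        then show "coprime (1 + t * q) D" by (rule coprime_good[OF p(1) Dpq])
      qed
    next
      case False
      then show ?thesis using p1 coprime_good[OF p(1) Dpq] by (intro that[of 0]) auto
    qed
  qed
  have Tt0: "T h = \<omega> ^ (t0 * (p - h)) * F t0 / of_nat p" if h: "h < p" for h
  proof -
    have "(\<Sum>t<p. \<omega> ^ (t * (p - h)) * F t) = (\<Sum>t\<in>{t0}. \<omega> ^ (t * (p - h)) * F t)"
      by (rule sum.mono_neutral_right) (use t0 Fgood in auto)
    then have "of_nat p * T h = \<omega> ^ (t0 * (p - h)) * F t0" using inv[OF h] by simp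
    then show ?thesis using p1 by (simp add: field_simps)
  qed
  have \<omega>0: "\<omega> \<noteq> 0" using \<omega>p p1 by (metis power_0_left one_neq_zero neq0_conv not_one_le_zero)
  have Ft0: "F t0 = 0"
  proof (cases "p ^ 2 dvd D")
    case True
    then have "p dvd q" using Dpq p1 by (simp add: power2_eq_square)
    then show ?thesis using Fgood coprime_good2[OF p(1) Dpq] by blast
  next
    case False
    then have cp: "card I < p" using p(3) by simp
    have "card ((\<lambda>i. e i mod p) ` I) \<le> card I" using I(1) by (rule card_image_le)
    then have "card ((\<lambda>i. e i mod p) ` I) < card {..<p}" using cp by simp
    then have "{..<p} \<noteq> (\<lambda>i. e i mod p) ` I" by (metis less_irrefl)
    moreover have "(\<lambda>i. e i mod p) ` I \<subseteq> {..<p}" using p1 by auto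
    ultimately obtain g0 where g0: "g0 < p" "g0 \<notin> (\<lambda>i. e i mod p) ` I" by blast
    then have em: "{i\<in>I. e i mod p = g0} = {}" by auto
    have "T g0 = 0" unfolding T_def by (simp only: em sum.empty)
    then have "\<omega> ^ (t0 * (p - g0)) * F t0 = 0" using Tt0[OF g0(1)] p1 by simp
    then show ?thesis using \<omega>0 by simp
  qed
  have T00: "T 0 = 0" using Tt0[of 0] Ft0 p1 by simp
  have "{i\<in>I. e i mod p = 0} = I"
  proof (rule minimal[rule_format])
    show "{i\<in>I. e i mod p = 0} \<subseteq> I" by auto
    show "{i\<in>I. e i mod p = 0} \<noteq> {}" using I(2) e0 by auto
    show "(\<Sum>i\<in>{i\<in>I. e i mod p = 0}. a i * u i) = 0"
      using T00 unfolding T_def x_def by (simp add: ue)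
  qed
  then have pe: "p dvd e i" if "i \<in> I" for i using that by auto
  show ?thesis
  proof
    fix i assume i: "i \<in> I"
    obtain k where k: "e i = p * k" using pe[OF i] by (elim dvdE)
    have "u i ^ (D div p) = \<xi> ^ (p * k * q)" using i by (simp add: ue k q_def power_mult)
    also have "\<dots> = (\<xi> ^ D) ^ k" unfolding Dpq by (simp add: ac_simps flip: power_mult)
    finally show "u i ^ (D div p) = 1" using \<xi>D by simp
  qed
qed


lemma mann:
  fixes a u :: "'i \<Rightarrow> complex"
  assumes "finite I" "card I \<le> 4" "i0 \<in> I" "u i0 = 1"
    "\<forall>i\<in>I. a i \<in> \<rat>" "\<forall>i\<in>I. u i ^ D = 1" "D > 0"
    "(\<Sum>i\<in>I. a i * u i) = 0"
    "\<forall>J \<subseteq> I. J \<noteq> {} \<longrightarrow> (\<Sum>i\<in>J. a i * u i) = 0 \<longrightarrow> J = I"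
  shows "\<forall>i\<in>I. u i ^ 6 = 1"
  using assms(6,7)
proof (induction D rule: less_induct)
  case (less D)
  show ?case
  proof (cases "D dvd 6")
    case True
    then obtain k where k: "6 = D * k" by (elim dvdE)
    show ?thesis
    proof
      fix i assume "i \<in> I"
      then have "u i ^ D = 1" using less.prems(1) by blast
      then have "(u i ^ D) ^ k = 1" by simp
      then show "u i ^ 6 = 1" by (simp only: k power_mult)
    qed
  next
    case False
    obtain p where p: "prime p" "p dvd D" "p ^ 2 dvd D \<or> 5 \<le> p"
      using not_dvd6[OF less.prems(2) False] by blast
    have p3: "p ^ 2 dvd D \<or> card I < p" using p(3) assms(2) by auto
    have step: "\<forall>i\<in>I. u i ^ (D div p) = 1"
      by (rule mann_step[OF assms(1,3,4,5) less.prems(1,2) assms(8,9) p(1,2) p3])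
    have p1: "p > 1" using p(1) prime_gt_1_nat by blast
    have lt: "D div p < D" using p1 less.prems(2) by simp
    have pos: "D div p > 0" using p(2) less.prems(2) p1
      by (metis dvd_div_eq_0_iff gr0I not_gr0 zero_less_one less_trans)
    show ?thesis by (rule less.IH[OF lt step pos])
  qed
qed


definition V :: "complex \<Rightarrow> bool" where
  "V z \<longleftrightarrow> (\<exists>r \<gamma>. r \<in> \<rat> \<and> r > 0 \<and> \<gamma> \<in> \<rat> \<and>
      z = complex_of_real r * exp (complex_of_real (pi * \<gamma>) * \<i>))"

lemma norm_expi: "cmod (exp (complex_of_real t * \<i>)) = 1"
  using norm_exp_i_times[of t] by (simp add: mult.commute)

lemma unit_root:
  assumes "\<gamma> \<in> \<rat>"
  shows "\<exists>N>0. exp (complex_of_real (pi * \<gamma>) * \<i>) ^ N = 1"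
proof -
  obtain P Q where PQ: "Q > 0" "\<gamma> = of_int P / of_int Q" using assms by (elim Rats_cases')
  define N where "N = nat (2 * Q)"
  have N0: "N > 0" using PQ by (simp add: N_def)
  have rN: "real N = 2 * real_of_int Q" using PQ by (simp add: N_def)
  have "exp (complex_of_real (pi * \<gamma>) * \<i>) ^ N = exp (of_nat N * (complex_of_real (pi * \<gamma>) * \<i>))"
    by (rule exp_of_nat_mult[symmetric])
  also have "of_nat N * (complex_of_real (pi * \<gamma>) * \<i>) = complex_of_real (2 * real_of_int P * pi) * \<i>"
  proof -
    have e2: "real N * (pi * \<gamma>) = 2 * real_of_int P * pi" using PQ rN by (simp add: field_simps)
    have e1: "of_nat N * (complex_of_real (pi * \<gamma>) * \<i>) = complex_of_real (real N * (pi * \<gamma>)) * \<i>"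
      by (simp only: of_real_mult of_real_of_nat_eq mult.assoc)
    show ?thesis by (simp only: e1 e2)
  qed
  also have "exp \<dots> = 1" by (rule exp_integer_2pi) simp
  finally show ?thesis using N0 by blast
qed

lemma V_facts:
  assumes "V z"
  shows "z \<noteq> 0" "cmod z \<in> \<rat>" "\<exists>N>0. sgn z ^ N = 1"
proof -
  obtain r \<gamma> where r: "r \<in> \<rat>" "r > 0" "\<gamma> \<in> \<rat>"
    and z: "z = complex_of_real r * exp (complex_of_real (pi * \<gamma>) * \<i>)"
    using assms unfolding V_def by blast
  have cz: "cmod z = r" using r(2) by (simp add: z norm_mult norm_expi)
  show "z \<noteq> 0" using r(2) by (simp add: z)
  show "cmod z \<in> \<rat>" using cz r(1) by simp
  have "sgn z = z / complex_of_real r" by (simp add: sgn_eq cz)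
  also have "\<dots> = exp (complex_of_real (pi * \<gamma>) * \<i>)" using r(2) by (simp add: z)
  finally have "sgn z = exp (complex_of_real (pi * \<gamma>) * \<i>)" .
  then show "\<exists>N>0. sgn z ^ N = 1" using unit_root[OF r(3)] by simp
qed

lemma V_neg:
  assumes "V z" shows "V (- z)"
proof -
  obtain r \<gamma> where r: "r \<in> \<rat>" "r > 0" "\<gamma> \<in> \<rat>"
    and z: "z = complex_of_real r * exp (complex_of_real (pi * \<gamma>) * \<i>)"
    using assms unfolding V_def by blast
  have "exp (complex_of_real (pi * (\<gamma> + 1)) * \<i>) = exp (complex_of_real (pi * \<gamma>) * \<i> + \<i> * complex_of_real pi)"
    by (simp add: algebra_simps)
  also have "\<dots> = - exp (complex_of_real (pi * \<gamma>) * \<i>)" by (simp add: exp_add exp_pi_i')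
  finally have e: "exp (complex_of_real (pi * (\<gamma> + 1)) * \<i>) = - exp (complex_of_real (pi * \<gamma>) * \<i>)" .
  have "- z = complex_of_real r * (- exp (complex_of_real (pi * \<gamma>) * \<i>))" by (simp add: z)
  also have "\<dots> = complex_of_real r * exp (complex_of_real (pi * (\<gamma> + 1)) * \<i>)" by (simp only: e)
  finally have "- z = complex_of_real r * exp (complex_of_real (pi * (\<gamma> + 1)) * \<i>)" .
  moreover have "\<gamma> + 1 \<in> \<rat>" using r(3) by simp
  ultimately show ?thesis unfolding V_def using r(1,2) by blast
qed

lemma sgn_decomp: "z = complex_of_real (cmod z) * sgn z"
  by (cases "z = 0") (simp_all add: sgn_eq)

definition Ed :: "complex \<Rightarrow> complex \<Rightarrow> bool" where
  "Ed p q \<longleftrightarrow> p \<noteq> q \<and> cmod (p - q) \<in> \<rat> \<and> rational_angle p q"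

lemma Ed_V:
  assumes "Ed p q" shows "V (q - p)"
proof -
  obtain r \<gamma> where r: "r > 0" "\<gamma> \<in> \<rat>" and z: "q - p = complex_of_real r * exp (complex_of_real (pi * \<gamma>) * \<i>)"
    using assms unfolding Ed_def rational_angle_def by blast
  have "cmod (q - p) = r" using r(1) by (simp add: z norm_mult norm_expi)
  moreover have "cmod (q - p) \<in> \<rat>" using assms unfolding Ed_def by (simp add: norm_minus_commute)
  ultimately have "r \<in> \<rat>" by simp
  then show ?thesis unfolding V_def using r z by blast
qed

lemma Ed_sym:
  assumes "Ed p q" shows "Ed q p"
proof -
  have Vn: "V (p - q)" using V_neg[OF Ed_V[OF assms]] by simp
  then obtain r \<gamma> where r: "r \<in> \<rat>" "r > 0" "\<gamma> \<in> \<rat>"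
    and z: "p - q = complex_of_real r * exp (complex_of_real (pi * \<gamma>) * \<i>)"
    unfolding V_def by blast
  have "rational_angle q p" unfolding rational_angle_def using assms r z unfolding Ed_def by auto
  then show ?thesis using assms unfolding Ed_def by (auto simp: norm_minus_commute)
qed

lemma of_real_Rats: "(r::real) \<in> \<rat> \<Longrightarrow> complex_of_real r \<in> \<rat>"
  by (elim Rats_cases') (simp add: Rats_divide)

lemma four_term:
  fixes x :: "nat \<Rightarrow> complex"
  assumes V: "\<And>i. i < 4 \<Longrightarrow> V (x i)"
    and tot: "sum x {0,1,2,3} = 0"
    and nz: "\<forall>J \<subseteq> {0,1,2,3}. J \<noteq> {} \<longrightarrow> sum x J = 0 \<longrightarrow> J = {0,1,2,3}"
  shows "\<forall>i\<in>{0,1,2,3}. (sgn (x i) / sgn (x 0)) ^ 6 = 1"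
proof -
  have "\<forall>i<4. \<exists>N>0. sgn (x i) ^ N = 1" using V V_facts(3) by blast
  then obtain N where N: "\<forall>i<4. N i > 0 \<and> sgn (x i) ^ N i = 1"
    by metis
  define D where "D = N 0 * N 1 * N 2 * N 3"
  have D0: "D > 0" using N by (simp add: D_def)
  have dv: "N i dvd D" if "i < 4" for i
  proof -
    have "i = 0 \<or> i = 1 \<or> i = 2 \<or> i = 3" using that by auto
    then show ?thesis unfolding D_def by auto
  qed
  have sD: "sgn (x i) ^ D = 1" if i4: "i < 4" for i
  proof -
    obtain k where "D = N i * k" using dv[OF i4] by (elim dvdE)
    then have "sgn (x i) ^ D = (sgn (x i) ^ N i) ^ k" by (simp add: power_mult)
    then show ?thesis using N i4 by simp
  qed
  have x0: "x 0 \<noteq> 0" using V_facts(1)[OF V[of 0]] by simp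
  have sx0: "sgn (x 0) \<noteq> 0" using x0 by (simp add: sgn_zero_iff)
  define a where "a i = complex_of_real (cmod (x i) / cmod (x 0))" for i
  define u where "u i = sgn (x i) / sgn (x 0)" for i
  have au: "a i * u i = x i / x 0" for i
  proof -
    have "a i * u i = (complex_of_real (cmod (x i)) * sgn (x i)) / (complex_of_real (cmod (x 0)) * sgn (x 0))"
      unfolding a_def u_def by (simp add: field_simps)
    then show ?thesis using sgn_decomp[of "x i"] sgn_decomp[of "x 0"] by simp
  qed
  have sumJ: "(\<Sum>i\<in>J. a i * u i) = sum x J / x 0" for J
    by (simp add: au sum_divide_distrib)
  have "\<forall>i\<in>{0,1,2,3::nat}. u i ^ 6 = 1"
  proof (rule mann[of "{0,1,2,3::nat}" 0 u a D])
    show "finite {0,1,2,3::nat}" by simp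
    show "card {0,1,2,3::nat} \<le> 4" by (rule order_trans[OF card_insert_le_m1]) auto
    show "(0::nat) \<in> {0,1,2,3}" by simp
    show "u 0 = 1" using sx0 by (simp add: u_def)
    show "\<forall>i\<in>{0,1,2,3::nat}. a i \<in> \<rat>"
    proof
      fix i :: nat assume i: "i \<in> {0,1,2,3}"
      then have "i < 4" by auto
      then have "cmod (x i) / cmod (x 0) \<in> \<rat>" using V_facts(2)[OF V] by (simp add: Rats_divide)
      then show "a i \<in> \<rat>" unfolding a_def by (rule of_real_Rats)
    qed
    show "\<forall>i\<in>{0,1,2,3::nat}. u i ^ D = 1"
    proof
      fix i :: nat assume i: "i \<in> {0,1,2,3}"
      then have "i < 4" by auto
      then show "u i ^ D = 1" using sD[of i] sD[of 0] by (simp add: u_def power_divide)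
    qed
    show "D > 0" by (rule D0)
    show "(\<Sum>i\<in>{0,1,2,3::nat}. a i * u i) = 0" by (simp only: sumJ tot) simp
    show "\<forall>J\<subseteq>{0,1,2,3::nat}. J \<noteq> {} \<longrightarrow> (\<Sum>i\<in>J. a i * u i) = 0 \<longrightarrow> J = {0,1,2,3}"
      using nz x0 by (simp add: sumJ)
  qed
  then show ?thesis by (simp add: u_def)
qed


definition line2 :: "complex \<Rightarrow> complex \<Rightarrow> complex set" where
  "line2 a b = {a + complex_of_real t * (b - a) | t. True}"

lemma nz_cases:
  fixes A B C E :: complex
  assumes "A \<noteq> 0" "B \<noteq> 0" "C \<noteq> 0" "E \<noteq> 0"
    "A + B \<noteq> 0" "A + C \<noteq> 0" "A + E \<noteq> 0" "B + C \<noteq> 0" "B + E \<noteq> 0" "C + E \<noteq> 0"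
    "A + B + C + E = 0"
    and J: "J \<subseteq> {0,1,2,3::nat}" "J \<noteq> {}"
    and s: "sum (\<lambda>i::nat. if i = 0 then A else if i = 1 then B else if i = 2 then C else E) J = 0"
  shows "J = {0,1,2,3}"
proof -
  let ?x = "\<lambda>i::nat. if i = 0 then A else if i = 1 then B else if i = 2 then C else E"
  have "sum ?x J = sum ?x ({0,1,2,3} \<inter> J)" using J(1) by (simp add: Int_absorb1)
  also have "\<dots> = (\<Sum>i\<in>{0,1,2,3}. if i \<in> J then ?x i else 0)" by (rule sum.inter_restrict) simp
  also have "\<dots> = (if 0 \<in> J then A else 0) + ((if 1 \<in> J then B else 0) + ((if 2 \<in> J then C else 0) + (if 3 \<in> J then E else 0)))"
    by simp
  finally have eq: "(if 0 \<in> J then A else 0) + ((if 1 \<in> J then B else 0) + ((if 2 \<in> J then C else 0) + (if 3 \<in> J then E else 0))) = 0"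
    using s by simp
  have t1: "A + B + C \<noteq> 0" using assms(4,11) by (metis add.right_neutral add_left_cancel)
  have t2: "A + B + E \<noteq> 0" using assms(3,11) by (metis add.commute add.left_commute add.right_neutral add_left_cancel)
  have t3: "A + C + E \<noteq> 0" using assms(2,11) by (metis add.commute add.left_commute add.right_neutral add_left_cancel)
  have t4: "B + C + E \<noteq> 0" using assms(1,11) by (metis add.commute add.left_commute add.right_neutral add_left_cancel)
  have "0 \<in> J \<and> 1 \<in> J \<and> 2 \<in> J \<and> 3 \<in> J"
  proof (rule ccontr)
    assume "\<not> (0 \<in> J \<and> 1 \<in> J \<and> 2 \<in> J \<and> 3 \<in> J)"
    moreover have "0 \<in> J \<or> 1 \<in> J \<or> 2 \<in> J \<or> 3 \<in> J" using J by auto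
    ultimately show False using eq assms(1-10) t1 t2 t3 t4
      by (cases "0 \<in> J"; cases "1 \<in> J"; cases "2 \<in> J"; cases "3 \<in> J") (simp_all add: add.assoc)
  qed
  then show ?thesis using J(1) by auto
qed


lemma sgn_neg6: fixes z c :: complex shows "(sgn (- z) / c) ^ 6 = (sgn z / c) ^ 6"
proof -
  have "sgn (- z) / c = - (sgn z / c)" by (simp add: sgn_minus)
  then show ?thesis by simp
qed

lemma CN:
  assumes "finite S"
  shows "card {s \<in> S. Ed q1 s \<and> Ed s q2 \<and> q2 \<notin> line2 s q1} \<le> 38"
proof -
  define R where "R = {s \<in> S. Ed q1 s \<and> Ed s q2 \<and> q2 \<notin> line2 s q1}"
  have finR: "finite R" using assms by (simp add: R_def)
  show ?thesis
  proof (cases "R = {}")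
    case True then show ?thesis by (simp add: R_def[symmetric])
  next
    case False
    then obtain s0 where s0: "s0 \<in> R" by blast
    define v0 where "v0 = s0 - q1"
    define w0 where "w0 = q2 - s0"
    have Vv0: "V v0" using s0 unfolding R_def v0_def using Ed_V by blast
    have Vw0: "V w0" using s0 unfolding R_def w0_def using Ed_V by blast
    have q1l: "q1 \<in> line2 s q1" for s unfolding line2_def by (rule CollectI, rule exI[of _ 1]) simp
    have q12: "q1 \<noteq> q2" using s0 q1l unfolding R_def by auto
    define M where "M = {s \<in> R. (sgn (s - q1) / sgn v0) ^ 6 = 1 \<and> (sgn (q2 - s) / sgn v0) ^ 6 = 1}"
    have sub: "R \<subseteq> {s0, q1 + w0} \<union> M"
    proof
      fix s assume s: "s \<in> R"
      show "s \<in> {s0, q1 + w0} \<union> M"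
      proof (cases "s = s0 \<or> s = q1 + w0")
        case True then show ?thesis by auto
      next
        case False
        define v where "v = s - q1"
        define w where "w = q2 - s"
        have Vv: "V v" using s unfolding R_def v_def using Ed_V by blast
        have Vw: "V w" using s unfolding R_def w_def using Ed_V by blast
        define x where "x = (\<lambda>i::nat. if i = 0 then v0 else if i = 1 then w0 else if i = 2 then - v else - w)"
        have Vx: "V (x i)" if "i < 4" for i
          unfolding x_def using Vv0 Vw0 V_neg[OF Vv] V_neg[OF Vw] by auto
        have nzv: "v0 \<noteq> 0" "w0 \<noteq> 0" "v \<noteq> 0" "w \<noteq> 0" using Vv0 Vw0 Vv Vw V_facts(1) by blast+
        have tot: "v0 + w0 + - v + - w = 0" by (simp add: v0_def w0_def v_def w_def)
        have f1: "v0 + w0 \<noteq> 0" using q12 by (simp add: v0_def w0_def)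
        have f2: "v0 + - v \<noteq> 0" using False by (auto simp: v0_def v_def)
        have f3: "v0 + - w \<noteq> 0" using False by (auto simp: v0_def w_def w0_def algebra_simps)
        have f4: "w0 + - v \<noteq> 0" using False by (auto simp: v_def w0_def algebra_simps)
        have f5: "w0 + - w \<noteq> 0" using False by (simp add: w0_def w_def)
        have f6: "- v + - w \<noteq> 0" using q12 by (simp add: v_def w_def)
        have nz: "\<forall>J \<subseteq> {0,1,2,3}. J \<noteq> {} \<longrightarrow> sum x J = 0 \<longrightarrow> J = {0,1,2,3}"
        proof (intro allI impI)
          fix J :: "nat set" assume "J \<subseteq> {0,1,2,3}" "J \<noteq> {}" "sum x J = 0"
          then show "J = {0,1,2,3}" unfolding x_def
            by (intro nz_cases[of v0 w0 "- v" "- w"]) (use nzv f1 f2 f3 f4 f5 f6 tot in auto)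
        qed
        have totx: "sum x {0,1,2,3} = 0" by (simp add: x_def v0_def w0_def v_def w_def)
        have "\<forall>i\<in>{0,1,2,3}. (sgn (x i) / sgn (x 0)) ^ 6 = 1"
          by (rule four_term[OF Vx totx nz])
        then have "(sgn (- v) / sgn v0) ^ 6 = 1" "(sgn (- w) / sgn v0) ^ 6 = 1"
          by (auto simp: x_def)
        then have "(sgn v / sgn v0) ^ 6 = 1" "(sgn w / sgn v0) ^ 6 = 1"
          by (simp_all only: sgn_neg6)
        then show ?thesis using s unfolding M_def v_def w_def by auto
      qed
    qed
    define Rt where "Rt = {z::complex. z ^ 6 = 1}"
    have cRt: "card Rt = 6" unfolding Rt_def by (rule card_roots_unity_eq) simp
    have fRt: "finite Rt" unfolding Rt_def by (rule finite_roots_unity) simp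
    define \<phi> where "\<phi> s = (sgn (s - q1) / sgn v0, sgn (q2 - s) / sgn v0)" for s
    have sv0: "sgn v0 \<noteq> 0" using Vv0 V_facts(1) by (simp add: sgn_zero_iff)
    have inj: "inj_on \<phi> M"
    proof (rule inj_onI)
      fix s s' assume s: "s \<in> M" and s': "s' \<in> M" and eq: "\<phi> s = \<phi> s'"
      define v where "v = s - q1"
      define w where "w = q2 - s"
      define v' where "v' = s' - q1"
      define w' where "w' = q2 - s'"
      have su: "sgn v = sgn v'" "sgn w = sgn w'" using eq sv0 unfolding \<phi>_def v_def v'_def w_def w'_def by auto
      have vw: "v + w = v' + w'" by (simp add: v_def w_def v'_def w'_def)
      have ncol: "\<And>t. w \<noteq> complex_of_real t * v"
      proof
        fix t assume "w = complex_of_real t * v"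
        then have "q2 = s + complex_of_real (- t) * (q1 - s)" by (simp add: w_def v_def algebra_simps)
        then have "q2 \<in> line2 s q1" unfolding line2_def by blast
        then show False using s unfolding M_def R_def by auto
      qed
      have nzv: "v \<noteq> 0" using s unfolding M_def R_def Ed_def v_def by auto
      have "cmod v = cmod v'"
      proof (rule ccontr)
        assume ne: "cmod v \<noteq> cmod v'"
        have "complex_of_real (cmod v) * sgn v + complex_of_real (cmod w) * sgn w
            = complex_of_real (cmod v') * sgn v + complex_of_real (cmod w') * sgn w"
          using vw sgn_decomp[of v] sgn_decomp[of w] sgn_decomp[of v'] sgn_decomp[of w'] su by simp
        then have "complex_of_real (cmod v - cmod v') * sgn v = complex_of_real (cmod w' - cmod w) * sgn w"
          by (simp add: algebra_simps)
        then have sv: "sgn v = complex_of_real ((cmod w' - cmod w) / (cmod v - cmod v')) * sgn w"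
          using ne by (simp add: field_simps)
        define k where "k = (cmod w' - cmod w) / (cmod v - cmod v')"
        have "sgn v \<noteq> 0" using nzv by (simp add: sgn_zero_iff)
        then have k0: "k \<noteq> 0" using sv k_def by auto
        obtain sw cw cv where d: "sgn w = sw" "cmod w = cw" "cmod v = cv" by blast
        have cv0: "cv \<noteq> 0" using nzv d(3) by auto
        have hv: "v = complex_of_real cv * (complex_of_real k * sw)"
          using sgn_decomp[of v] sv k_def d by simp
        have hw: "w = complex_of_real cw * sw" using sgn_decomp[of w] d by simp
        have "w = complex_of_real (cw / (cv * k)) * v"
          using k0 cv0 unfolding hv hw by (simp add: field_simps)
        then show False using ncol by blast
      qed
      then have "v = v'" using sgn_decomp[of v] sgn_decomp[of v'] su by metis
      then show "s = s'" by (simp add: v_def v'_def)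
    qed
    have img: "\<phi> ` M \<subseteq> Rt \<times> Rt" unfolding \<phi>_def M_def Rt_def by auto
    have "card M = card (\<phi> ` M)" using inj by (simp add: card_image)
    also have "\<dots> \<le> card (Rt \<times> Rt)" using img fRt by (intro card_mono) auto
    also have "\<dots> = 36" using cRt by (simp add: card_cartesian_product)
    finally have cM: "card M \<le> 36" .
    have finM: "finite M" using finR by (simp add: M_def)
    have "card R \<le> card ({s0, q1 + w0} \<union> M)" using sub finM by (intro card_mono) auto
    also have "\<dots> \<le> card {s0, q1 + w0} + card M" by (rule card_Un_le)
    also have "card {s0, q1 + w0} \<le> 2" by (rule order_trans[OF card_insert_le_m1]) auto
    finally show ?thesis using cM unfolding R_def by simp
  qed
qed


lemma pairs_card:
  assumes "finite S"
  shows "2 * card {{p, q} | p q. p \<in> S \<and> q \<in> S \<and> Ed p q} = card {(p,q). p \<in> S \<and> q \<in> S \<and> Ed p q}"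
proof -
  define A where "A = {(p,q). p \<in> S \<and> q \<in> S \<and> Ed p q}"
  define f where "f = (\<lambda>(p::complex,q::complex). {p,q})"
  have finA: "finite A"
  proof (rule finite_subset)
    show "A \<subseteq> S \<times> S" by (auto simp: A_def)
    show "finite (S \<times> S)" using assms by simp
  qed
  have P2: "{{p, q} | p q. p \<in> S \<and> q \<in> S \<and> Ed p q} = f ` A"
  proof (rule set_eqI)
    fix y
    show "y \<in> {{p, q} | p q. p \<in> S \<and> q \<in> S \<and> Ed p q} \<longleftrightarrow> y \<in> f ` A"
    proof
      assume "y \<in> {{p, q} | p q. p \<in> S \<and> q \<in> S \<and> Ed p q}"
      then obtain p q where "y = {p,q}" "p \<in> S" "q \<in> S" "Ed p q" by blast
      then have "(p,q) \<in> A" "y = f (p,q)" by (simp_all add: A_def f_def)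
      then show "y \<in> f ` A" by blast
    next
      assume "y \<in> f ` A"
      then obtain x where x: "x \<in> A" "y = f x" by blast
      obtain p q where "x = (p,q)" by (cases x)
      then show "y \<in> {{p, q} | p q. p \<in> S \<and> q \<in> S \<and> Ed p q}" using x by (auto simp: A_def f_def)
    qed
  qed
  have "card A = (\<Sum>x\<in>A. 1)" by simp
  also have "\<dots> = (\<Sum>y\<in>f ` A. \<Sum>x\<in>{x \<in> A. f x = y}. 1)" by (rule sum.image_gen[OF finA])
  also have "\<dots> = (\<Sum>y\<in>f ` A. 2)"
  proof (rule sum.cong[OF refl])
    fix y assume "y \<in> f ` A"
    then obtain p q where pq: "(p,q) \<in> A" "y = {p,q}" by (auto simp: f_def)
    have pq': "p \<noteq> q" using pq(1) by (simp add: A_def Ed_def)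
    have "Ed q p" using pq(1) Ed_sym by (simp add: A_def)
    have qpA: "(q,p) \<in> A" using pq(1) \<open>Ed q p\<close> by (simp add: A_def)
    have "{x \<in> A. f x = y} = {(p,q),(q,p)}"
    proof (rule set_eqI)
      fix x :: "complex \<times> complex"
      obtain a b where ab: "x = (a,b)" by (cases x)
      have "f x = y \<longleftrightarrow> (a = p \<and> b = q \<or> a = q \<and> b = p)"
        unfolding ab pq(2) f_def by (simp add: doubleton_eq_iff)
      then show "x \<in> {x \<in> A. f x = y} \<longleftrightarrow> x \<in> {(p,q),(q,p)}"
        using pq(1) qpA ab by auto
    qed
    then show "(\<Sum>x\<in>{x \<in> A. f x = y}. 1) = (2::nat)" using pq' by simp
  qed
  also have "\<dots> = 2 * card (f ` A)" by simp
  finally show ?thesis using P2 by (simp add: A_def)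
qed


theorem theorem4:
  fixes S :: "complex set" and n :: nat and \<alpha> :: real
  assumes "1/2 \<le> \<alpha>" and "\<alpha> \<le> 1"
    and "n \<ge> 1"
    and "finite S" and "card S = n"
    and "\<And>L. is_line L \<Longrightarrow> real (card (S \<inter> L)) \<le> real n powr \<alpha>"
  shows "real (card {{p, q} | p q. p \<in> S \<and> q \<in> S \<and> p \<noteq> q \<and>
            cmod (p - q) \<in> \<rat> \<and> rational_angle p q})
         \<le> 4 * real n powr (1 + \<alpha>)"
proof -
  define m where "m = real n powr \<alpha>"
  have n1: "real n \<ge> 1" using assms(3) by simp
  have m0: "m > 0" using n1 by (simp add: m_def)
  have mm: "m * m \<ge> real n"
  proof -
    have "m * m = real n powr (\<alpha> + \<alpha>)" unfolding m_def by (rule powr_add[symmetric])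
    also have "\<dots> \<ge> real n powr 1" using n1 assms(1) by (intro powr_mono) auto
    finally show ?thesis using n1 by simp
  qed
  have fin: "finite S" by (rule assms(4))
  define Nb where "Nb s = {q \<in> S. Ed s q}" for s
  define d where "d s = real (card (Nb s))" for s
  define A where "A = {(p,q). p \<in> S \<and> q \<in> S \<and> Ed p q}"
  have A_Sig: "A = Sigma S Nb" by (auto simp: A_def Nb_def)
  have cardA: "real (card A) = (\<Sum>s\<in>S. d s)"
    unfolding A_Sig d_def using fin by (simp add: card_SigmaI Nb_def)
  have dsum: "d s = (\<Sum>q\<in>S. of_bool (Ed s q))" for s
    using fin by (simp add: d_def Nb_def sum_of_bool_eq Int_def)
  have lineb: "real (card (S \<inter> line2 s q)) \<le> m" if "s \<noteq> q" for s q
  proof -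
    have "is_line (line2 s q)" unfolding is_line_def line2_def using that
      by (intro exI[of _ s] exI[of _ "q - s"]) auto
    then show ?thesis using assms(6) by (simp add: m_def)
  qed
  define Tr where "Tr s q1 q2 = (of_bool (Ed s q1 \<and> Ed s q2 \<and> q2 \<notin> line2 s q1) :: real)" for s q1 q2
  have lower: "d s * (d s - m) \<le> (\<Sum>q1\<in>S. \<Sum>q2\<in>S. Tr s q1 q2)" for s
  proof -
    have "(\<Sum>q1\<in>S. of_bool (Ed s q1) * (d s - m)) \<le> (\<Sum>q1\<in>S. \<Sum>q2\<in>S. Tr s q1 q2)"
    proof (rule sum_mono)
      fix q1 assume q1: "q1 \<in> S"
      show "of_bool (Ed s q1) * (d s - m) \<le> (\<Sum>q2\<in>S. Tr s q1 q2)"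
      proof (cases "Ed s q1")
        case False
        then show ?thesis by (simp add: Tr_def)
      next
        case True
        then have sq: "s \<noteq> q1" by (simp add: Ed_def)
        have "(\<Sum>q2\<in>S. of_bool (Ed s q2)) - (\<Sum>q2\<in>S. of_bool (q2 \<in> line2 s q1)) \<le> (\<Sum>q2\<in>S. Tr s q1 q2)"
          unfolding sum_subtractf[symmetric] using True by (intro sum_mono) (auto simp: Tr_def)
        moreover have "(\<Sum>q2\<in>S. of_bool (q2 \<in> line2 s q1)) = real (card (S \<inter> line2 s q1))"
          using fin by (simp add: sum_of_bool_eq Int_def)
        ultimately show ?thesis using lineb[OF sq] True dsum[of s] by simp
      qed
    qed
    moreover have "(\<Sum>q1\<in>S. of_bool (Ed s q1) * (d s - m)) = d s * (d s - m)"
      by (simp add: sum_distrib_right[symmetric] dsum[symmetric])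
    ultimately show ?thesis by simp
  qed
  have upper: "(\<Sum>s\<in>S. \<Sum>q1\<in>S. \<Sum>q2\<in>S. Tr s q1 q2) \<le> 38 * real n ^ 2"
  proof -
    have "(\<Sum>s\<in>S. \<Sum>q1\<in>S. \<Sum>q2\<in>S. Tr s q1 q2) = (\<Sum>q1\<in>S. \<Sum>s\<in>S. \<Sum>q2\<in>S. Tr s q1 q2)"
      by (rule sum.swap)
    also have "\<dots> = (\<Sum>q1\<in>S. \<Sum>q2\<in>S. \<Sum>s\<in>S. Tr s q1 q2)"
      by (intro sum.cong refl sum.swap)
    also have "\<dots> \<le> (\<Sum>q1\<in>S. \<Sum>q2\<in>S. 38)"
    proof (intro sum_mono)
      fix q1 q2
      have "(\<Sum>s\<in>S. Tr s q1 q2) = real (card (S \<inter> {s. Ed s q1 \<and> Ed s q2 \<and> q2 \<notin> line2 s q1}))"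
        unfolding Tr_def using fin by (simp add: sum_of_bool_eq)
      also have "S \<inter> {s. Ed s q1 \<and> Ed s q2 \<and> q2 \<notin> line2 s q1} \<subseteq> {s \<in> S. Ed q1 s \<and> Ed s q2 \<and> q2 \<notin> line2 s q1}"
        using Ed_sym by blast
      then have "card (S \<inter> {s. Ed s q1 \<and> Ed s q2 \<and> q2 \<notin> line2 s q1}) \<le> card {s \<in> S. Ed q1 s \<and> Ed s q2 \<and> q2 \<notin> line2 s q1}"
        using fin by (intro card_mono) auto
      also have "\<dots> \<le> 38" by (rule CN[OF fin])
      finally show "(\<Sum>s\<in>S. Tr s q1 q2) \<le> 38" by simp
    qed
    also have "\<dots> = 38 * real n ^ 2" using assms(5) by (simp add: power2_eq_square)
    finally show ?thesis .
  qed
  define Dd where "Dd = (\<Sum>s\<in>S. d s)"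
  have key: "(\<Sum>s\<in>S. (d s)^2) - m * Dd \<le> 38 * real n ^ 2"
  proof -
    have "(\<Sum>s\<in>S. d s * (d s - m)) = (\<Sum>s\<in>S. (d s)^2 - m * d s)"
      by (intro sum.cong refl) (simp add: power2_eq_square right_diff_distrib mult.commute)
    also have "\<dots> = (\<Sum>s\<in>S. (d s)^2) - (\<Sum>s\<in>S. m * d s)" by (rule sum_subtractf)
    also have "(\<Sum>s\<in>S. m * d s) = m * Dd" by (simp add: Dd_def sum_distrib_left)
    finally have "(\<Sum>s\<in>S. (d s)^2) - m * Dd = (\<Sum>s\<in>S. d s * (d s - m))" by simp
    also have "\<dots> \<le> (\<Sum>s\<in>S. \<Sum>q1\<in>S. \<Sum>q2\<in>S. Tr s q1 q2)" by (intro sum_mono lower)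
    finally show ?thesis using upper by simp
  qed
  have CS: "Dd ^ 2 \<le> (\<Sum>s\<in>S. (d s)^2) * real n"
    unfolding Dd_def using sum_squared_le_sum_of_squares[of d S] assms(5) by simp
  have Dd0: "Dd \<ge> 0" unfolding Dd_def d_def by (simp add: sum_nonneg)
  have DdB: "Dd \<le> 8 * m * real n"
  proof (rule ccontr)
    assume "\<not> Dd \<le> 8 * m * real n"
    then have big: "Dd > 8 * m * real n" by simp
    have "(\<Sum>s\<in>S. (d s)^2) * real n \<le> (38 * real n ^ 2 + m * Dd) * real n"
      using key by (intro mult_right_mono) auto
    then have h1: "Dd ^ 2 \<le> (38 * real n ^ 2 + m * Dd) * real n" using CS by linarith
    have h2: "Dd * (Dd - m * real n) = Dd ^ 2 - m * Dd * real n" by (simp add: power2_eq_square right_diff_distrib mult.commute)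
    have h3: "(38 * real n ^ 2 + m * Dd) * real n = 38 * real n ^ 3 + m * Dd * real n"
      by (simp add: power2_eq_square power3_eq_cube distrib_right)
    have "Dd * (Dd - m * real n) \<le> 38 * real n ^ 3" using h1 h2 h3 by linarith
    moreover have "Dd * (Dd - m * real n) > (8 * m * real n) * (7 * m * real n)"
    proof (rule mult_strict_mono)
      show "8 * m * real n < Dd" by (rule big)
      show "7 * m * real n < Dd - m * real n" using big by simp
      have "0 < 8 * m * real n" using m0 n1 by simp
      then show "0 < Dd" using big by linarith
      show "0 \<le> 7 * m * real n" using m0 n1 by simp
    qed
    moreover have "(8 * m * real n) * (7 * m * real n) = 56 * (m * m) * (real n * real n)" by (simp add: algebra_simps)
    moreover have "56 * (m * m) * (real n * real n) \<ge> 56 * real n * (real n * real n)"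
      using mm n1 by (intro mult_right_mono) auto
    moreover have "56 * real n * (real n * real n) = 56 * real n ^ 3" by (simp add: power3_eq_cube)
    ultimately have "56 * real n ^ 3 < 38 * real n ^ 3" by linarith
    moreover have "real n ^ 3 > 0" using n1 by simp
    ultimately show False by linarith
  qed
  have setE: "{{p, q} | p q. p \<in> S \<and> q \<in> S \<and> p \<noteq> q \<and> cmod (p - q) \<in> \<rat> \<and> rational_angle p q}
      = {{p, q} | p q. p \<in> S \<and> q \<in> S \<and> Ed p q}" by (simp add: Ed_def)
  have "2 * real (card {{p, q} | p q. p \<in> S \<and> q \<in> S \<and> Ed p q}) = real (card A)"
  proof -
    have "real (2 * card {{p, q} | p q. p \<in> S \<and> q \<in> S \<and> Ed p q}) = real (card A)"
      using pairs_card[OF fin] unfolding A_def by (simp only:)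
    then show ?thesis by simp
  qed
  also have "\<dots> = Dd" using cardA by (simp add: Dd_def)
  finally have "real (card {{p, q} | p q. p \<in> S \<and> q \<in> S \<and> Ed p q}) \<le> 4 * m * real n"
    using DdB by linarith
  also have "4 * m * real n = 4 * real n powr (1 + \<alpha>)"
    using n1 by (simp add: m_def powr_add)
  finally show ?thesis unfolding setE .
qed

end
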